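(* $\partial^2\,(d')^2=(1-d^2)\,(d^2-\lambda^2)$.
   Context: Let $0<\kappa<1$ and $\lambda=\sqrt{1-\kappa^2}$. Let $F(\tfrac16,\tfrac56;\tfrac12;\cdot)$ denote the Gauss hypergeometric function. Define $u$ as a function of $\phi$ near $0$ by $u=\int_0^{\sin\phi}F(\tfrac16,\tfrac56;\tfrac12;\kappa^2t^2)\,\frac{dt}{\sqrt{1-t^2}}$; near the origin (fixing $0$) this inverts to a holomorphic function $u\mapsto\phi(u)$ with $\phi(0)=0$. Let $\psi$ be the holomorphic function near $0$ with $\psi(0)=0$ and $\sin\psi=\kappa\sin\phi$. Set $d=\cos\psi$ and $\partial=\cos\tfrac23\psi$ (a function, not an operator), as functions of $u$ on a small disc about $0$; primes denote $d/du$. *)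

theory Defs
  imports "HOL-Complex_Analysis.Complex_Analysis"
begin

text \<open>Gauss hypergeometric function F(a,b;c;z) as its power series (meaningful for |z| < 1).\<close>
definition hyp2F1 :: "complex \<Rightarrow> complex \<Rightarrow> complex \<Rightarrow> complex \<Rightarrow> complex" where
  "hyp2F1 a b c z = (\<Sum>n. pochhammer a n * pochhammer b n / (pochhammer c n * fact n) * z ^ n)"

text \<open>u as a function of phi: the integral from 0 to sin phi of
  F(1/6,5/6;1/2;kappa^2 t^2) / sqrt(1 - t^2) dt, taken along the straight segment
  (principal square root; near the origin this is the usual holomorphic integrand).\<close>
definition U_of_phi :: "real \<Rightarrow> complex \<Rightarrow> complex" where
  "U_of_phi \<kappa> \<phi> = contour_integral (linepath 0 (sin \<phi>))
     (\<lambda>t. hyp2F1 (1/6) (5/6) (1/2) ((of_real \<kappa>)\<^sup>2 * t\<^sup>2) / csqrt (1 - t\<^sup>2))"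

end

theory Submission
  imports Defs
begin


definition hc :: "nat \<Rightarrow> complex" where
  "hc n = pochhammer (1/6) n * pochhammer (5/6) n / (pochhammer (1/2) n * fact n)"

definition hF :: "complex \<Rightarrow> complex" where "hF z = (\<Sum>n. hc n * z ^ n)"
definition hF1 :: "complex \<Rightarrow> complex" where "hF1 z = (\<Sum>n. diffs hc n * z ^ n)"
definition hF2 :: "complex \<Rightarrow> complex" where "hF2 z = (\<Sum>n. diffs (diffs hc) n * z ^ n)"

lemma hyp_eq: "hyp2F1 (1/6) (5/6) (1/2) z = hF z"
  by (simp add: hyp2F1_def hF_def hc_def)

lemma poch_half_nz: "pochhammer (1/2 :: complex) n \<noteq> 0"
proof
  assume "pochhammer (1/2 :: complex) n = 0"
  then obtain k where "k < n" "(1/2::complex) = - of_nat k"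
    unfolding pochhammer_eq_0_iff by blast
  then have "Re (1/2::complex) = Re (- of_nat k)" by (intro arg_cong[where f=Re]) simp
  then show False by simp
qed

lemma hc_Suc: "hc (Suc n) = hc n * ((1/6 + of_nat n) * (5/6 + of_nat n) / ((1/2 + of_nat n) * (of_nat n + 1)))"
proof -
  have a: "(1/2 + of_nat n :: complex) \<noteq> 0"
  proof
    assume "(1/2 + of_nat n :: complex) = 0"
    then have "Re (1/2 + of_nat n :: complex) = 0" by simp
    then show False by simp
  qed
  show ?thesis
    unfolding hc_def using poch_half_nz[of n] a
    by (simp add: pochhammer_Suc fact_Suc field_simps del: of_nat_Suc) (simp add: algebra_simps)
qed

lemma hc_0: "hc 0 = 1" by (simp add: hc_def)

lemma ratio_le: "norm ((1/6 + of_nat n) * (5/6 + of_nat n) / ((1/2 + of_nat n) * (of_nat n + 1)) :: complex) \<le> 1"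
proof -
  define x :: real where "x = (1/6 + real n) * (5/6 + real n) / ((1/2 + real n) * (real n + 1))"
  have e: "((1/6 + of_nat n) * (5/6 + of_nat n) / ((1/2 + of_nat n) * (of_nat n + 1)) :: complex) = of_real x"
    by (simp add: x_def)
  have "(1/6 + real n) * (5/6 + real n) \<le> (1/2 + real n) * (real n + 1)"
    by (intro mult_mono) auto
  then have "x \<le> 1" unfolding x_def by (simp add: pos_divide_le_eq)
  moreover have "0 \<le> x" unfolding x_def by simp
  ultimately show ?thesis by (simp add: e)
qed

lemma hc_summable: assumes "norm z < 1" shows "summable (\<lambda>n. hc n * z ^ n)"
proof (rule summable_ratio_test[where c = "norm z" and N = 0])
  fix n :: nat
  show "norm (hc (Suc n) * z ^ Suc n) \<le> norm z * norm (hc n * z ^ n)"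
  proof -
    define q :: complex where "q = (1/6 + of_nat n) * (5/6 + of_nat n) / ((1/2 + of_nat n) * (of_nat n + 1))"
    have "hc (Suc n) * z ^ Suc n = (hc n * z ^ n) * z * q" by (simp add: hc_Suc q_def)
    then have "norm (hc (Suc n) * z ^ Suc n) = norm (hc n * z ^ n) * norm z * norm q"
      by (simp only: norm_mult)
    also have "\<dots> \<le> norm (hc n * z ^ n) * norm z * 1"
      using ratio_le[of n] unfolding q_def[symmetric] by (intro mult_left_mono) auto
    finally show ?thesis by (simp add: mult_ac)
  qed
qed (rule assms)


lemma hc_diffs_summable: assumes "norm z < 1" shows "summable (\<lambda>n. diffs hc n * z ^ n)"
  by (rule termdiff_converges[where K=1]) (use assms hc_summable in auto)

lemma hc_diffs2_summable: assumes "norm z < 1" shows "summable (\<lambda>n. diffs (diffs hc) n * z ^ n)"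
  by (rule termdiff_converges[where K=1]) (use assms hc_diffs_summable in auto)

lemma hF_deriv: assumes "norm z < 1" shows "(hF has_field_derivative hF1 z) (at z)"
  unfolding hF_def[abs_def] hF1_def
  by (rule termdiffs_strong'[where K=1]) (use assms hc_summable in auto)

lemma hF1_deriv: assumes "norm z < 1" shows "(hF1 has_field_derivative hF2 z) (at z)"
  unfolding hF1_def[abs_def] hF2_def
  by (rule termdiffs_strong'[where K=1]) (use assms hc_diffs_summable in auto)

lemma sums_shift_z:
  fixes z :: complex
  assumes "(\<lambda>n. c n * z^n) sums S"
  shows "(\<lambda>n. (if n = 0 then 0 else c (n - 1)) * z^n) sums (z * S)"
proof -
  have "(\<lambda>n. z * (c n * z^n)) sums (z * S)" by (rule sums_mult[OF assms])
  then have "(\<lambda>n. (\<lambda>m. (if m = 0 then 0 else c (m - 1)) * z^m) (Suc n)) sums (z * S)"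
    by (simp add: mult_ac)
  then have "(\<lambda>m. (if m = 0 then 0 else c (m - 1)) * z^m) sums (z * S + (\<lambda>m. (if m = 0 then 0 else c (m - 1)) * z^m) 0)"
    by (rule sums_Suc_iff[THEN iffD1])
  then show ?thesis by simp
qed

lemma hF_ode:
  assumes "norm z < 1"
  shows "z * (1 - z) * hF2 z + (1/2 - 2 * z) * hF1 z - 5/36 * hF z = 0"
proof -
  have A: "(\<lambda>n. hc n * z^n) sums hF z"
    unfolding hF_def using hc_summable[OF assms] by (rule summable_sums)
  have B: "(\<lambda>n. diffs hc n * z^n) sums hF1 z"
    unfolding hF1_def using hc_diffs_summable[OF assms] by (rule summable_sums)
  have C: "(\<lambda>n. diffs (diffs hc) n * z^n) sums hF2 z"
    unfolding hF2_def using hc_diffs2_summable[OF assms] by (rule summable_sums)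
  have zB: "(\<lambda>n. (of_nat n * hc n) * z^n) sums (z * hF1 z)"
  proof -
    have "(\<lambda>n. (if n = 0 then 0 else diffs hc (n - 1)) * z^n) = (\<lambda>n. (of_nat n * hc n) * z^n)"
      by (rule ext) (auto simp: diffs_def split: nat.split)
    then show ?thesis using sums_shift_z[OF B] by simp
  qed
  have zC: "(\<lambda>n. (of_nat n * of_nat (Suc n) * hc (Suc n)) * z^n) sums (z * hF2 z)"
  proof -
    have "(\<lambda>n. (if n = 0 then 0 else diffs (diffs hc) (n - 1)) * z^n)
        = (\<lambda>n. (of_nat n * of_nat (Suc n) * hc (Suc n)) * z^n)"
      by (rule ext) (auto simp: diffs_def split: nat.split)
    then show ?thesis using sums_shift_z[OF C] by simp
  qed
  have zzC: "(\<lambda>n. (of_nat n * (of_nat n - 1) * hc n) * z^n) sums (z * (z * hF2 z))"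
  proof -
    have "(\<lambda>n. (if n = 0 then 0 else (if n - 1 = 0 then 0 else diffs (diffs hc) (n - 1 - 1))) * z^n)
        = (\<lambda>n. (of_nat n * (of_nat n - 1) * hc n) * z^n)"
    proof (rule ext)
      fix n :: nat
      consider "n = 0" | "n = 1" | m where "n = Suc (Suc m)"
        by (metis One_nat_def not0_implies_Suc)
      then show "(if n = 0 then 0 else (if n - 1 = 0 then 0 else diffs (diffs hc) (n - 1 - 1))) * z^n
        = (of_nat n * (of_nat n - 1) * hc n) * z^n"
        by cases (auto simp: diffs_def)
    qed
    moreover have "(\<lambda>n. (if n = 0 then 0 else (\<lambda>m. if m = 0 then 0 else diffs (diffs hc) (m - 1)) (n - 1)) * z^n) sums (z * (z * hF2 z))"
      by (rule sums_shift_z[OF sums_shift_z[OF C]])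
    ultimately show ?thesis by simp
  qed
  have S: "(\<lambda>n. (of_nat n * of_nat (Suc n) * hc (Suc n)) * z^n - (of_nat n * (of_nat n - 1) * hc n) * z^n
      + 1/2 * (diffs hc n * z^n) - 2 * ((of_nat n * hc n) * z^n) - 5/36 * (hc n * z^n))
      sums (z * hF2 z - z * (z * hF2 z) + 1/2 * hF1 z - 2 * (z * hF1 z) - 5/36 * hF z)"
    by (intro sums_diff sums_add sums_mult zC zzC zB A B)
  have Z: "(of_nat n * of_nat (Suc n) * hc (Suc n)) * z^n - (of_nat n * (of_nat n - 1) * hc n) * z^n
      + 1/2 * (diffs hc n * z^n) - 2 * ((of_nat n * hc n) * z^n) - 5/36 * (hc n * z^n) = 0" for n
  proof -
    have a: "(1/2 + of_nat n :: complex) \<noteq> 0"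
    proof
      assume "(1/2 + of_nat n :: complex) = 0"
      then have "Re (1/2 + of_nat n :: complex) = 0" by simp
      then show False by simp
    qed
    have b: "(of_nat n + 1 :: complex) \<noteq> 0"
      by (metis of_nat_Suc of_nat_eq_0_iff add.commute nat.distinct(1))
    have E: "(of_nat n + 1) * (1/2 + of_nat n) * hc (Suc n) = (1/6 + of_nat n) * (5/6 + of_nat n) * hc n"
    proof -
      define P :: complex where "P = (1/6 + of_nat n) * (5/6 + of_nat n)"
      define Q :: complex where "Q = (1/2 + of_nat n) * (of_nat n + 1)"
      have Q: "Q \<noteq> 0" using a b by (simp add: Q_def)
      have "hc (Suc n) = hc n * (P / Q)" unfolding hc_Suc P_def Q_def ..
      then have "Q * hc (Suc n) = P * hc n" using Q by (simp add: field_simps)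
      then show ?thesis unfolding P_def Q_def by (simp add: mult_ac)
    qed
    have "(of_nat n * of_nat (Suc n) * hc (Suc n)) * z^n - (of_nat n * (of_nat n - 1) * hc n) * z^n
      + 1/2 * (diffs hc n * z^n) - 2 * ((of_nat n * hc n) * z^n) - 5/36 * (hc n * z^n)
      = z^n * ((of_nat n + 1) * (1/2 + of_nat n) * hc (Suc n) - (1/6 + of_nat n) * (5/6 + of_nat n) * hc n)"
      by (simp add: diffs_def field_simps)
    then show ?thesis using E by simp
  qed
  have "(\<lambda>n. 0) sums (z * hF2 z - z * (z * hF2 z) + 1/2 * hF1 z - 2 * (z * hF1 z) - 5/36 * hF z)"
    using S unfolding Z .
  then have "z * hF2 z - z * (z * hF2 z) + 1/2 * hF1 z - 2 * (z * hF1 z) - 5/36 * hF z = 0"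
    using sums_unique2 sums_zero by blast
  then show ?thesis by (simp add: algebra_simps)
qed


lemma hF_chain [derivative_intros]:
  "(g has_field_derivative g') (at x within s) \<Longrightarrow> norm (g x) < 1 \<Longrightarrow> D = hF1 (g x) * g'
   \<Longrightarrow> ((\<lambda>x. hF (g x)) has_field_derivative D) (at x within s)"
  using DERIV_chain2[OF hF_deriv] by blast

lemma hF1_chain [derivative_intros]:
  "(g has_field_derivative g') (at x within s) \<Longrightarrow> norm (g x) < 1 \<Longrightarrow> D = hF2 (g x) * g'
   \<Longrightarrow> ((\<lambda>x. hF1 (g x)) has_field_derivative D) (at x within s)"
  using DERIV_chain2[OF hF1_deriv] by blast

lemma hF_0: "hF 0 = 1"
  unfolding hF_def using powser_zero[of hc] by (simp add: hc_0)

definition hh :: "complex \<Rightarrow> complex" where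
  "hh w = hF (sin w ^ 2) * cos w - cos (2/3 * w)"
definition hh1 :: "complex \<Rightarrow> complex" where
  "hh1 w = 2 * hF1 (sin w ^ 2) * sin w * cos w ^ 2 - hF (sin w ^ 2) * sin w + 2/3 * sin (2/3 * w)"

lemma hh_deriv: assumes "norm (sin w ^ 2) < 1" shows "(hh has_field_derivative hh1 w) (at w within S)"
  unfolding hh_def[abs_def] hh1_def
  by (rule derivative_eq_intros refl assms | simp)+ (simp add: algebra_simps power2_eq_square)

lemma hh1_deriv: assumes "norm (sin w ^ 2) < 1" shows "(hh1 has_field_derivative (- 4/9 * hh w)) (at w within S)"
proof -
  have ode: "sin w ^ 2 * (1 - sin w ^ 2) * hF2 (sin w ^ 2) + (1/2 - 2 * sin w ^ 2) * hF1 (sin w ^ 2) - 5/36 * hF (sin w ^ 2) = 0"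
    by (rule hF_ode[OF assms])
  have pyth: "sin w ^ 2 + cos w ^ 2 = 1" by (rule sin_cos_squared_add)
  show ?thesis
    unfolding hh_def hh1_def[abs_def]
    apply (rule derivative_eq_intros refl assms | simp)+
    using ode pyth by algebra
qed


lemma small_sin: obtains \<rho> :: real where "\<rho> > 0" "\<And>w::complex. norm w < \<rho> \<Longrightarrow> norm (sin w) < 1"
proof -
  have "isCont sin (0::complex)" by simp
  then have "(sin \<longlongrightarrow> sin (0::complex)) (at 0)" by (simp add: isCont_def)
  then have "((\<lambda>w::complex. norm (sin w)) \<longlongrightarrow> norm (sin (0::complex))) (at 0)"
    by (rule tendsto_norm)
  then have "eventually (\<lambda>w::complex. norm (sin w) < 1) (at (0::complex))"
    by (rule order_tendstoD(2)) simp
  then obtain d where d: "d > 0" "\<And>w::complex. w \<noteq> 0 \<Longrightarrow> dist w 0 < d \<Longrightarrow> norm (sin w) < 1"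
    unfolding eventually_at by blast
  show ?thesis
  proof (rule that[of d])
    fix w :: complex assume "norm w < d"
    then show "norm (sin w) < 1" using d by (cases "w = 0") auto
  qed (use d in auto)
qed

lemma hh_zero: obtains \<rho> :: real where "\<rho> > 0" "\<And>w::complex. norm w < \<rho> \<Longrightarrow> hh w = 0"
proof -
  obtain \<rho> :: real where \<rho>: "\<rho> > 0" "\<And>w::complex. norm w < \<rho> \<Longrightarrow> norm (sin w) < 1" by (rule small_sin) auto
  have sm: "norm (sin w ^ 2) < 1" if "w \<in> ball 0 \<rho>" for w :: complex
  proof -
    have "norm (sin w) < 1" using \<rho>(2) that by simp
    then have "norm (sin w) ^ 2 < 1" by (simp add: power_less_one_iff)
    then show ?thesis by (simp add: norm_power)
  qed
  define q where "q w = (hh1 w + (2*\<i>/3) * hh w) * exp (-(2*\<i>/3) * w)" for w :: complex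
  have "\<exists>c. \<forall>w\<in>ball 0 \<rho>. q w = c"
  proof (rule has_field_derivative_zero_constant)
    fix w :: complex assume w: "w \<in> ball 0 \<rho>"
    show "(q has_field_derivative 0) (at w within ball 0 \<rho>)"
      unfolding q_def[abs_def]
      apply (rule derivative_eq_intros hh_deriv hh1_deriv sm[OF w] refl)+
      by (simp add: field_simps)
  qed simp
  then obtain c where c: "\<And>w. w \<in> ball 0 \<rho> \<Longrightarrow> q w = c" by blast
  have h0: "hh 0 = 0" by (simp add: hh_def hF_0)
  have h10: "hh1 0 = 0" by (simp add: hh1_def)
  have "c = 0" using c[of 0] \<rho>(1) by (simp add: q_def h0 h10)
  then have e1: "hh1 w = -(2*\<i>/3) * hh w" if "w \<in> ball 0 \<rho>" for w :: complex
  proof -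
    have "(hh1 w + (2*\<i>/3) * hh w) * exp (-(2*\<i>/3) * w) = 0"
      using c[OF that] \<open>c = 0\<close> by (simp add: q_def)
    then have "hh1 w + (2*\<i>/3) * hh w = 0" by simp
    then show ?thesis by algebra
  qed
  define r where "r w = hh w * exp ((2*\<i>/3) * w)" for w :: complex
  have "\<exists>c. \<forall>w\<in>ball 0 \<rho>. r w = c"
  proof (rule has_field_derivative_zero_constant)
    fix w :: complex assume w: "w \<in> ball 0 \<rho>"
    show "(r has_field_derivative 0) (at w within ball 0 \<rho>)"
      unfolding r_def[abs_def]
      apply (rule derivative_eq_intros hh_deriv sm[OF w] refl)+
      by (simp add: e1[OF w] algebra_simps)
  qed simp
  then obtain c' where c': "\<And>w. w \<in> ball 0 \<rho> \<Longrightarrow> r w = c'" by blast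
  have "c' = 0" using c'[of 0] \<rho>(1) by (simp add: r_def h0)
  show ?thesis
  proof (rule that[of \<rho>])
    fix w :: complex assume "norm w < \<rho>"
    then have "r w = 0" using c' \<open>c' = 0\<close> by simp
    then show "hh w = 0" by (simp add: r_def)
  qed (rule \<rho>(1))
qed



lemma alg: fixes F c s Q k C P S R :: complex
  assumes h1: "F*C*P = R" and h2: "c*Q = k*(C*P)" and h3: "s = k*S" and h4: "R^2 = 1 - S^2"
    and h5: "S^2+C^2=1" and h6: "s^2+c^2=1"
  shows "(F*c)^2 * (-s*Q)^2 = (1-c^2)*(c^2 - (1-k^2))"
proof -
  have "(F*c)^2 * (-s*Q)^2 = s^2 * (F*(c*Q))^2" by (simp add: power_mult_distrib)
  also have "\<dots> = s^2 * k^2 * (F*C*P)^2" unfolding h2 by (simp add: power_mult_distrib mult_ac)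
  also have "\<dots> = s^2 * k^2 * (1 - S^2)" unfolding h1 h4 ..
  also have "\<dots> = (1-c^2)*(c^2 - (1-k^2))"
  proof -
    have a: "1 - c^2 = s^2" using h6 by (simp add: algebra_simps)
    have b: "c^2 - (1 - k^2) = k^2 * (1 - S^2)"
      using h6 h3 by (simp add: power_mult_distrib algebra_simps)
    show ?thesis unfolding a b by (simp add: mult_ac)
  qed
  finally show ?thesis .
qed

theorem theorem4:
  fixes \<kappa> r :: real and \<phi> \<psi> :: "complex \<Rightarrow> complex"
  assumes "0 < \<kappa>" and "\<kappa> < 1"
    and "0 < r"
    and "\<phi> holomorphic_on ball 0 r" and "\<phi> 0 = 0"
    and "\<And>u. u \<in> ball 0 r \<Longrightarrow> U_of_phi \<kappa> (\<phi> u) = u"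
    and "\<psi> holomorphic_on ball 0 r" and "\<psi> 0 = 0"
    and "\<And>u. u \<in> ball 0 r \<Longrightarrow> sin (\<psi> u) = of_real \<kappa> * sin (\<phi> u)"
  shows "\<forall>u \<in> ball 0 r.
    (cos (2/3 * \<psi> u))\<^sup>2 * (deriv (\<lambda>v. cos (\<psi> v)) u)\<^sup>2
      = (1 - (cos (\<psi> u))\<^sup>2) * ((cos (\<psi> u))\<^sup>2 - (of_real (sqrt (1 - \<kappa>\<^sup>2)))\<^sup>2)"
proof -
  note k0 = assms(1) and k1 = assms(2) and r0 = assms(3) and holphi = assms(4) and phi0 = assms(5)
    and inv = assms(6) and holpsi = assms(7) and psi0 = assms(8) and sinpsi = assms(9)
  define g where "g t = hF ((of_real \<kappa>)\<^sup>2 * t\<^sup>2) / csqrt (1 - t\<^sup>2)" for t :: complex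
  define V where "V s = contour_integral (linepath 0 s) g" for s :: complex
  have UV: "U_of_phi \<kappa> x = V (sin x)" for x
    unfolding U_of_phi_def V_def g_def[abs_def] hyp_eq ..
  have gd: "\<exists>D. (g has_field_derivative D) (at t)" if t: "norm t < 1" for t :: complex
  proof -
    have nt: "norm t ^ 2 < 1" using t by (simp add: power_less_one_iff)
    have "norm ((of_real \<kappa>)\<^sup>2 * t\<^sup>2) = \<kappa>\<^sup>2 * norm t ^ 2"
      by (simp add: norm_mult norm_power)
    also have "\<dots> < 1"
    proof -
      have "\<kappa>\<^sup>2 < 1" using k0 k1 by (simp add: power_less_one_iff)
      then have "\<kappa>\<^sup>2 * norm t ^ 2 \<le> 1 * norm t ^ 2" by (intro mult_right_mono) auto
      then show ?thesis using nt by linarith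
    qed
    finally have n1: "norm ((of_real \<kappa>)\<^sup>2 * t\<^sup>2) < 1" .
    have nr: "1 - t\<^sup>2 \<notin> \<real>\<^sub>\<le>\<^sub>0"
      by (rule one_minus_z2_notin_nonpos_Reals) (use t abs_Re_le_cmod[of t] in linarith)
    have nz: "csqrt (1 - t\<^sup>2) \<noteq> 0"
      using nr by auto
    show ?thesis
    proof -
      have p: "((\<lambda>t. (of_real \<kappa>)\<^sup>2 * t\<^sup>2) has_field_derivative (of_real \<kappa>)\<^sup>2 * (of_nat 2 * (1 * t ^ (2 - Suc 0)))) (at t)"
        by (intro DERIV_cmult DERIV_power DERIV_ident)
      have d1: "((\<lambda>t. hF ((of_real \<kappa>)\<^sup>2 * t\<^sup>2)) has_field_derivative hF1 ((of_real \<kappa>)\<^sup>2 * t\<^sup>2) * ((of_real \<kappa>)\<^sup>2 * (of_nat 2 * (1 * t ^ (2 - Suc 0))))) (at t)"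
        by (rule hF_chain[OF p n1 refl])
      have q: "((\<lambda>t. 1 - t\<^sup>2) has_field_derivative 0 - of_nat 2 * (1 * t ^ (2 - Suc 0))) (at t)"
        by (intro DERIV_diff DERIV_const DERIV_power DERIV_ident)
      have d2: "((\<lambda>t. csqrt (1 - t\<^sup>2)) has_field_derivative (0 - of_nat 2 * (1 * t ^ (2 - Suc 0))) / (2 * csqrt (1 - t\<^sup>2))) (at t)"
        by (rule has_field_derivative_csqrt'[OF q nr])
      show ?thesis unfolding g_def[abs_def] using DERIV_divide[OF d1 d2 nz] by blast
    qed
  qed
  have gh: "g holomorphic_on ball 0 1"
    using gd by (simp add: holomorphic_on_open)
  have Vd: "(V has_field_derivative g s) (at s)" if "norm s < 1" for s :: complex
  proof -
    have "(V has_field_derivative g s) (at s within ball 0 1)"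
      unfolding V_def[abs_def]
    proof (rule triangle_contour_integrals_convex_primitive)
      show "continuous_on (ball 0 1) g" using gh by (rule holomorphic_on_imp_continuous_on)
      show "(0::complex) \<in> ball 0 1" "convex (ball (0::complex) 1)" "s \<in> ball 0 1" using that by auto
      fix b c :: complex assume "b \<in> ball 0 1" "c \<in> ball 0 1"
      then have "convex hull {0,b,c} \<subseteq> ball 0 1" by (intro hull_minimal) auto
      then have "g holomorphic_on convex hull {0,b,c}" using gh holomorphic_on_subset by blast
      from Cauchy_theorem_triangle[OF this]
      show "contour_integral (linepath 0 b) g + contour_integral (linepath b c) g +
          contour_integral (linepath c 0) g = 0"
        by (rule has_chain_integral_chain_integral3)
    qed
    then show ?thesis using at_within_open[of s "ball 0 1"] that by simp
  qed
  have contphi: "continuous_on (ball 0 r) \<phi>" using holphi by (rule holomorphic_on_imp_continuous_on)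
  have contpsi: "continuous_on (ball 0 r) \<psi>" using holpsi by (rule holomorphic_on_imp_continuous_on)
  have contsp: "continuous_on (ball 0 r) (\<lambda>u. sin (\<phi> u))" by (intro continuous_intros contphi)
  define Oa where "Oa = ball 0 r \<inter> (\<lambda>u. sin (\<phi> u)) -` ball 0 1"
  have oO1: "open Oa" unfolding Oa_def by (rule continuous_open_preimage[OF contsp]) auto
  obtain \<rho> :: real where \<rho>: "\<rho> > 0" "\<And>w::complex. norm w < \<rho> \<Longrightarrow> hh w = 0"
    by (rule hh_zero) auto
  define Ob where "Ob = Oa \<inter> \<psi> -` ball 0 \<rho>"
  have O1r: "Oa \<subseteq> ball 0 r" by (auto simp: Oa_def)
  have oO: "open Ob" unfolding Ob_def
    by (rule continuous_open_preimage) (use oO1 O1r continuous_on_subset[OF contpsi] in auto)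
  have O0: "0 \<in> Ob" using r0 \<rho>(1) by (simp add: Ob_def Oa_def phi0 psi0)
  have Or: "Ob \<subseteq> ball 0 r" using O1r by (auto simp: Ob_def)
  have lam: "(complex_of_real (sqrt (1 - \<kappa>\<^sup>2)))\<^sup>2 = 1 - (of_real \<kappa>)\<^sup>2"
  proof -
    have "\<kappa>\<^sup>2 \<le> 1" using k0 k1 by (simp add: power_le_one)
    then have "(sqrt (1 - \<kappa>\<^sup>2))\<^sup>2 = 1 - \<kappa>\<^sup>2" by simp
    then have "complex_of_real ((sqrt (1 - \<kappa>\<^sup>2))\<^sup>2) = complex_of_real (1 - \<kappa>\<^sup>2)" by simp
    then show ?thesis by simp
  qed
  have key: "(cos (2/3 * \<psi> u))\<^sup>2 * (deriv (\<lambda>v. cos (\<psi> v)) u)\<^sup>2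
      = (1 - (cos (\<psi> u))\<^sup>2) * ((cos (\<psi> u))\<^sup>2 - (of_real (sqrt (1 - \<kappa>\<^sup>2)))\<^sup>2)"
    if uO: "u \<in> Ob" for u
  proof -
    have ur: "u \<in> ball 0 r" using uO Or by auto
    have sphi: "norm (sin (\<phi> u)) < 1" using uO by (auto simp: Ob_def Oa_def)
    have npsi: "norm (\<psi> u) < \<rho>" using uO by (auto simp: Ob_def)
    have dphi: "(\<phi> has_field_derivative deriv \<phi> u) (at u)" by (rule holomorphic_derivI[OF holphi open_ball ur])
    have dpsi: "(\<psi> has_field_derivative deriv \<psi> u) (at u)" by (rule holomorphic_derivI[OF holpsi open_ball ur])
    have dsphi: "((\<lambda>u. sin (\<phi> u)) has_field_derivative cos (\<phi> u) * deriv \<phi> u) (at u)"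
      by (rule DERIV_chain2[OF DERIV_sin dphi])
    have dspsi: "((\<lambda>u. sin (\<psi> u)) has_field_derivative cos (\<psi> u) * deriv \<psi> u) (at u)"
      by (rule DERIV_chain2[OF DERIV_sin dpsi])
    have dcpsi: "((\<lambda>u. cos (\<psi> u)) has_field_derivative - sin (\<psi> u) * deriv \<psi> u) (at u)"
      by (rule DERIV_chain2[OF DERIV_cos dpsi])
    have dc: "deriv (\<lambda>v. cos (\<psi> v)) u = - sin (\<psi> u) * deriv \<psi> u"
      by (rule DERIV_imp_deriv[OF dcpsi])
    have dV: "((\<lambda>u. V (sin (\<phi> u))) has_field_derivative g (sin (\<phi> u)) * (cos (\<phi> u) * deriv \<phi> u)) (at u)"
      by (rule DERIV_chain2[OF Vd[OF sphi] dsphi])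
    have did: "((\<lambda>u. V (sin (\<phi> u))) has_field_derivative 1) (at u)"
      by (rule has_field_derivative_transform_within_open[OF DERIV_ident open_ball ur])
         (simp add: inv UV[symmetric])
    have E1: "g (sin (\<phi> u)) * (cos (\<phi> u) * deriv \<phi> u) = 1"
      using DERIV_unique[OF dV did] .
    have dk: "((\<lambda>u. of_real \<kappa> * sin (\<phi> u)) has_field_derivative of_real \<kappa> * (cos (\<phi> u) * deriv \<phi> u)) (at u)"
      by (rule DERIV_cmult[OF dsphi])
    have dk2: "((\<lambda>u. sin (\<psi> u)) has_field_derivative of_real \<kappa> * (cos (\<phi> u) * deriv \<phi> u)) (at u)"
      by (rule has_field_derivative_transform_within_open[OF dk open_ball ur]) (simp add: sinpsi)
    have E2: "cos (\<psi> u) * deriv \<psi> u = of_real \<kappa> * (cos (\<phi> u) * deriv \<phi> u)"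
      using DERIV_unique[OF dspsi dk2] .
    have H: "hF (sin (\<psi> u) ^ 2) * cos (\<psi> u) = cos (2/3 * \<psi> u)"
      using \<rho>(2)[OF npsi] by (simp add: hh_def)
    have S: "sin (\<psi> u) = of_real \<kappa> * sin (\<phi> u)" using sinpsi[OF ur] .
    have G: "g (sin (\<phi> u)) = hF (sin (\<psi> u) ^ 2) / csqrt (1 - sin (\<phi> u) ^ 2)"
      unfolding g_def S by (simp add: power_mult_distrib)
    have R: "(csqrt (1 - sin (\<phi> u) ^ 2)) ^ 2 = 1 - sin (\<phi> u) ^ 2" by simp
    have Rnz: "csqrt (1 - sin (\<phi> u) ^ 2) \<noteq> 0"
    proof
      assume "csqrt (1 - sin (\<phi> u) ^ 2) = 0"
      then have "g (sin (\<phi> u)) = 0" unfolding G by simp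
      then show False using E1 by simp
    qed
    have E1': "hF (sin (\<psi> u) ^ 2) * cos (\<phi> u) * deriv \<phi> u = csqrt (1 - sin (\<phi> u) ^ 2)"
      using E1 Rnz unfolding G by (simp add: field_simps)
    have P1: "sin (\<phi> u) ^ 2 + cos (\<phi> u) ^ 2 = 1" by (rule sin_cos_squared_add)
    have P2: "sin (\<psi> u) ^ 2 + cos (\<psi> u) ^ 2 = 1" by (rule sin_cos_squared_add)
    show ?thesis unfolding dc lam H[symmetric]
      by (rule alg[OF _ E2 S R P1 P2]) (use E1' in \<open>simp add: mult_ac\<close>)
  qed
  have hc': "(\<lambda>v. cos (\<psi> v)) holomorphic_on ball 0 r" by (intro holomorphic_intros holpsi)
  have hd: "deriv (\<lambda>v. cos (\<psi> v)) holomorphic_on ball 0 r" by (rule holomorphic_deriv[OF hc' open_ball])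
  define D where "D u = (cos (2/3 * \<psi> u))\<^sup>2 * (deriv (\<lambda>v. cos (\<psi> v)) u)\<^sup>2
      - (1 - (cos (\<psi> u))\<^sup>2) * ((cos (\<psi> u))\<^sup>2 - (of_real (sqrt (1 - \<kappa>\<^sup>2)))\<^sup>2)" for u
  have hD: "D holomorphic_on ball 0 r" unfolding D_def[abs_def]
    by (intro holomorphic_intros holpsi hd)
  show ?thesis
  proof
    fix u :: complex assume ur: "u \<in> ball 0 r"
    have "D u = 0"
    proof (rule analytic_continuation[OF hD open_ball connected_ball Or])
      show "(0::complex) \<in> ball 0 r" using r0 by simp
      show "(0::complex) islimpt Ob" by (rule open_imp_islimpt[OF oO O0])
      show "\<And>z. z \<in> Ob \<Longrightarrow> D z = 0" using key by (simp add: D_def)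
    qed (rule ur)
    then show "(cos (2/3 * \<psi> u))\<^sup>2 * (deriv (\<lambda>v. cos (\<psi> v)) u)\<^sup>2
      = (1 - (cos (\<psi> u))\<^sup>2) * ((cos (\<psi> u))\<^sup>2 - (of_real (sqrt (1 - \<kappa>\<^sup>2)))\<^sup>2)"
      by (simp add: D_def)
  qed
qed

end
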